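(* Let $p=\frac12-\varepsilon$ with $0<\varepsilon\le\frac12$, and run Algorithm LB-Search (described in the context) with $r=\frac12-\eta$, where $\eta=\varepsilon/2$. If the reply to each query was erroneous with probability at most $p$, independently, then the algorithm outputs the target vertex with probability at least $1-n^{-3}$.
   Context: Setting: $G=(V,E)$ is a finite simple connected graph with $n$ vertices and an unknown target vertex $v^{*}$. A query on vertex $q$ returns a reply $v$; a correct reply is $v=q$ if $q=v^{*}$, and otherwise a neighbor of $q$ on a shortest path from $q$ to $v^{*}$. A vertex $u$ is consistent (compatible) with reply $v$ to query $q$ if $q=v=u$, or $q\ne v$ and $v$ lies on a shortest path between $u$ and $q$; $N(q,v)$ denotes the set of such $u$. For weights $\omega\colon V\to(0,\infty)$ and $X\subseteq V$ let $\omega(X)=\sum_{u\in X}\omega(u)$, $\Lambda(v)=\max_{u\in N(v)}\omega(N(v,u))$ where $N(v)$ is the neighbor set, and call $q$ $\delta$-close to a median if $\Lambda(q)\le(\frac12+\delta)\omega(V)$. Parameters: it is assumed that $\eta<\frac18$; $r=\frac12-\eta$, $\delta=\eta/4$, $\Gamma=\frac{1}{1-4\eta}$, $\tau=\frac{10\log_2 n}{\eta^2}$. Algorithm LB-Search: set $\omega(v)=1/n$ and a counter $\ell_v=0$ for every $v$. Repeat for $\tau$ steps: let $q$ be any vertex $\delta$-close to a median with respect to current weights; query $q$; for each vertex $u$ not compatible with the reply, set $\omega(u)\gets\omega(u)/\Gamma$ and $\ell_u\gets\ell_u+1$. Finally return a vertex $v$ with the smallest $\ell_v$. *)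

theory Defs
  imports "HOL-Probability.Probability"
begin

definition simple_graph :: "'a set \<Rightarrow> ('a \<Rightarrow> 'a \<Rightarrow> bool) \<Rightarrow> bool" where
  "simple_graph V E \<longleftrightarrow> finite V \<and> V \<noteq> {} \<and>
     (\<forall>x y. E x y \<longrightarrow> x \<in> V \<and> y \<in> V) \<and>
     (\<forall>x y. E x y \<longrightarrow> E y x) \<and> (\<forall>x. \<not> E x x)"

definition walk_of_len :: "('a \<Rightarrow> 'a \<Rightarrow> bool) \<Rightarrow> nat \<Rightarrow> 'a \<Rightarrow> 'a \<Rightarrow> bool" where
  "walk_of_len E k u v \<longleftrightarrow> (\<exists>xs. xs \<noteq> [] \<and> hd xs = u \<and> last xs = v \<and>
      length xs = Suc k \<and> successively E xs)"

definition connected_graph :: "'a set \<Rightarrow> ('a \<Rightarrow> 'a \<Rightarrow> bool) \<Rightarrow> bool" where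
  "connected_graph V E \<longleftrightarrow> simple_graph V E \<and> (\<forall>u\<in>V. \<forall>v\<in>V. \<exists>k. walk_of_len E k u v)"

definition gdist :: "('a \<Rightarrow> 'a \<Rightarrow> bool) \<Rightarrow> 'a \<Rightarrow> 'a \<Rightarrow> nat" where
  "gdist E u v = (LEAST k. walk_of_len E k u v)"

definition correct_reply :: "('a \<Rightarrow> 'a \<Rightarrow> bool) \<Rightarrow> 'a \<Rightarrow> 'a \<Rightarrow> 'a \<Rightarrow> bool" where
  "correct_reply E t q v \<longleftrightarrow>
     (q = t \<and> v = q) \<or>
     (q \<noteq> t \<and> E q v \<and> Suc (gdist E v t) = gdist E q t)"

definition compatible :: "('a \<Rightarrow> 'a \<Rightarrow> bool) \<Rightarrow> 'a \<Rightarrow> 'a \<Rightarrow> 'a \<Rightarrow> bool" where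
  "compatible E u q v \<longleftrightarrow>
     (q = v \<and> v = u) \<or> (q \<noteq> v \<and> gdist E q v + gdist E v u = gdist E q u)"

definition Ncomp :: "'a set \<Rightarrow> ('a \<Rightarrow> 'a \<Rightarrow> bool) \<Rightarrow> 'a \<Rightarrow> 'a \<Rightarrow> 'a set" where
  "Ncomp V E q v = {u \<in> V. compatible E u q v}"

definition wsum :: "('a \<Rightarrow> real) \<Rightarrow> 'a set \<Rightarrow> real" where
  "wsum \<omega> X = (\<Sum>u\<in>X. \<omega> u)"

definition delta_close :: "'a set \<Rightarrow> ('a \<Rightarrow> 'a \<Rightarrow> bool) \<Rightarrow> ('a \<Rightarrow> real) \<Rightarrow> real \<Rightarrow> 'a \<Rightarrow> bool" where
  "delta_close V E \<omega> \<delta> q \<longleftrightarrow> q \<in> V \<and>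
     (\<forall>u. E q u \<longrightarrow> wsum \<omega> (Ncomp V E q u) \<le> (1/2 + \<delta>) * wsum \<omega> V)"

text \<open>A history is the list of (query, reply) pairs so far. Counter l_u and weight omega(u).\<close>
definition cnt :: "('a \<Rightarrow> 'a \<Rightarrow> bool) \<Rightarrow> ('a \<times> 'a) list \<Rightarrow> 'a \<Rightarrow> nat" where
  "cnt E h u = length (filter (\<lambda>(q, v). \<not> compatible E u q v) h)"

definition weight :: "'a set \<Rightarrow> ('a \<Rightarrow> 'a \<Rightarrow> bool) \<Rightarrow> real \<Rightarrow> ('a \<times> 'a) list \<Rightarrow> 'a \<Rightarrow> real" where
  "weight V E \<Gamma> h u = (1 / real (card V)) / \<Gamma> ^ cnt E h u"

text \<open>Execution: Q = the algorithm's query choice (from the history),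
  cor / err = adversary's choice of correct / erroneous reply (may depend on the
  past error pattern and the query), c t = True iff the reply at step t is erroneous.\<close>
fun run :: "(('a \<times> 'a) list \<Rightarrow> 'a) \<Rightarrow> (bool list \<Rightarrow> 'a \<Rightarrow> 'a) \<Rightarrow> (bool list \<Rightarrow> 'a \<Rightarrow> 'a)
            \<Rightarrow> (nat \<Rightarrow> bool) \<Rightarrow> nat \<Rightarrow> ('a \<times> 'a) list" where
  "run Q cor err c 0 = []"
| "run Q cor err c (Suc t) =
     (let h = run Q cor err c t; q = Q h; bs = map c [0..<t]
      in h @ [(q, if c t then err bs q else cor bs q)])"

end

theory Submission
  imports Defs
begin


lemma walk0: "walk_of_len E 0 u u"
  unfolding walk_of_len_def by (rule exI[of _ "[u]"]) auto

lemma walk1: "E u v \<Longrightarrow> walk_of_len E 1 u v"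
  unfolding walk_of_len_def by (rule exI[of _ "[u,v]"]) auto

lemma walk0_eq: "walk_of_len E 0 u v \<Longrightarrow> u = v"
proof -
  assume "walk_of_len E 0 u v"
  then obtain xs where xs: "hd xs = u" "last xs = v" "length xs = Suc 0"
    unfolding walk_of_len_def by blast
  then obtain x where "xs = [x]" by (cases xs) auto
  then show "u = v" using xs by simp
qed

lemma walk_Suc: "walk_of_len E (Suc k) u v \<Longrightarrow> \<exists>w. E u w \<and> walk_of_len E k w v"
proof -
  assume "walk_of_len E (Suc k) u v"
  then obtain xs where xs: "hd xs = u" "last xs = v" "length xs = Suc (Suc k)" "successively E xs"
    unfolding walk_of_len_def by blast
  then obtain y xs' where 1: "xs = y # xs'" by (cases xs) auto
  then obtain z ys where 2: "xs' = z # ys" using xs(3) by (cases xs') auto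
  have e: "E u z" using xs(1,4) 1 2 by (simp add: successively_Cons)
  have s: "successively E (z # ys)" using xs(4) 1 2 by (simp add: successively_Cons)
  have l: "last (z # ys) = v" using xs(2) 1 2 by simp
  have n: "length (z # ys) = Suc k" using xs(3) 1 2 by simp
  have "walk_of_len E k z v" unfolding walk_of_len_def
    by (rule exI[of _ "z # ys"]) (use s l n in simp)
  then show ?thesis using e by blast
qed

lemma walk_Cons: "E u w \<Longrightarrow> walk_of_len E k w v \<Longrightarrow> walk_of_len E (Suc k) u v"
proof -
  assume e: "E u w" and "walk_of_len E k w v"
  then obtain xs where xs: "xs \<noteq> []" "hd xs = w" "last xs = v" "length xs = Suc k" "successively E xs"
    unfolding walk_of_len_def by blast
  then obtain ys where 1: "xs = w # ys" by (cases xs) auto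
  have s: "successively E (u # xs)" using xs(5) e 1 by (simp add: successively_Cons)
  show ?thesis unfolding walk_of_len_def
    by (rule exI[of _ "u # xs"]) (use s xs 1 in simp)
qed

lemma walk_trans: "walk_of_len E k1 x y \<Longrightarrow> walk_of_len E k2 y z \<Longrightarrow> walk_of_len E (k1+k2) x z"
proof (induction k1 arbitrary: x)
  case 0
  then have "x = y" by (intro walk0_eq)
  then show ?case using 0 by simp
next
  case (Suc k1)
  obtain w where w: "E x w" "walk_of_len E k1 w y" using walk_Suc[OF Suc.prems(1)] by blast
  have "walk_of_len E (k1 + k2) w z" using Suc.IH[OF w(2) Suc.prems(2)] .
  then have "walk_of_len E (Suc (k1 + k2)) x z" using walk_Cons[of E x w "k1+k2" z] w(1) by blast
  then show ?case by simp
qed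

lemma gdist_walk:
  assumes "connected_graph V E" "u \<in> V" "v \<in> V"
  shows "walk_of_len E (gdist E u v) u v"
proof -
  obtain k where "walk_of_len E k u v" using assms unfolding connected_graph_def by blast
  then show ?thesis unfolding gdist_def by (rule LeastI)
qed

lemma gdist_le: "walk_of_len E k u v \<Longrightarrow> gdist E u v \<le> k"
  unfolding gdist_def by (rule Least_le)

lemma gdist_tri:
  assumes "connected_graph V E" "x \<in> V" "y \<in> V" "z \<in> V"
  shows "gdist E x z \<le> gdist E x y + gdist E y z"
proof -
  have "walk_of_len E (gdist E x y) x y" by (rule gdist_walk[OF assms(1,2,3)])
  moreover have "walk_of_len E (gdist E y z) y z" by (rule gdist_walk[OF assms(1,3,4)])
  ultimately have "walk_of_len E (gdist E x y + gdist E y z) x z" by (rule walk_trans)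
  then show ?thesis by (rule gdist_le)
qed

lemma gdist_self: "gdist E u u = 0"
  using gdist_le[OF walk0] by simp

lemma gdist_0: "connected_graph V E \<Longrightarrow> u \<in> V \<Longrightarrow> v \<in> V \<Longrightarrow> gdist E u v = 0 \<Longrightarrow> u = v"
proof -
  assume a: "connected_graph V E" "u \<in> V" "v \<in> V" "gdist E u v = 0"
  have "walk_of_len E (gdist E u v) u v" by (rule gdist_walk[OF a(1,2,3)])
  then show "u = v" using a(4) walk0_eq by simp
qed

lemma cg_parts:
  assumes "connected_graph V E"
  shows "finite V" "V \<noteq> {}" "\<forall>x y. E x y \<longrightarrow> x \<in> V \<and> y \<in> V" "\<forall>x. \<not> E x x"
proof -
  have sg: "simple_graph V E" using assms unfolding connected_graph_def by (rule conjunct1)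
  then have c: "finite V \<and> V \<noteq> {} \<and> (\<forall>x y. E x y \<longrightarrow> x \<in> V \<and> y \<in> V) \<and>
     (\<forall>x y. E x y \<longrightarrow> E y x) \<and> (\<forall>x. \<not> E x x)" unfolding simple_graph_def .
  show "finite V" using c by (rule conjunct1)
  show "V \<noteq> {}" using c[THEN conjunct2] by (rule conjunct1)
  show "\<forall>x y. E x y \<longrightarrow> x \<in> V \<and> y \<in> V" using c[THEN conjunct2, THEN conjunct2] by (rule conjunct1)
  show "\<forall>x. \<not> E x x" using c[THEN conjunct2, THEN conjunct2, THEN conjunct2] by (rule conjunct2)
qed

lemma edge_V: "connected_graph V E \<Longrightarrow> E u v \<Longrightarrow> u \<in> V \<and> v \<in> V"
  using cg_parts(3) by blast

lemma edge_irr: "connected_graph V E \<Longrightarrow> E u v \<Longrightarrow> u \<noteq> v"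
  using cg_parts(4) by blast

lemma gdist_edge: "connected_graph V E \<Longrightarrow> E u v \<Longrightarrow> gdist E u v = 1"
proof -
  assume G: "connected_graph V E" and e: "E u v"
  have le: "gdist E u v \<le> 1" by (rule gdist_le[OF walk1[of E u v, OF e]])
  have "gdist E u v \<noteq> 0" using gdist_0[OF G] edge_V[OF G e] edge_irr[OF G e] by blast
  then show ?thesis using le by simp
qed

lemma gdist_step:
  assumes G: "connected_graph V E" and qV: "q \<in> V" and vV: "v \<in> V" and qv: "q \<noteq> v"
  shows "\<exists>w. E q w \<and> Suc (gdist E w v) = gdist E q v"
proof -
  have wk: "walk_of_len E (gdist E q v) q v" by (rule gdist_walk[OF G qV vV])
  have "gdist E q v \<noteq> 0" using gdist_0[OF G qV vV] qv by blast
  then obtain k where k: "gdist E q v = Suc k" using not0_implies_Suc by blast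
  have ws: "walk_of_len E (Suc k) q v" using wk k by simp
  obtain w where w: "E q w" "walk_of_len E k w v" using walk_Suc[OF ws] by blast
  have wV: "w \<in> V" using edge_V[OF G w(1)] by simp
  have 1: "gdist E w v \<le> k" by (rule gdist_le[OF w(2)])
  have 2: "gdist E q v \<le> gdist E q w + gdist E w v" by (rule gdist_tri[OF G qV wV vV])
  have 3: "gdist E q w = 1" by (rule gdist_edge[OF G w(1)])
  have "Suc (gdist E w v) = gdist E q v" using 1 2 3 k by linarith
  then show ?thesis using w(1) by blast
qed

lemma Ncomp_sub:
  assumes G: "connected_graph V E" and qV: "q \<in> V" and vV: "v \<in> V" and qv: "q \<noteq> v"
  shows "\<exists>w. E q w \<and> Ncomp V E q v \<subseteq> Ncomp V E q w"
proof -
  obtain w where w: "E q w" "Suc (gdist E w v) = gdist E q v" using gdist_step[OF G qV vV qv] by blast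
  have wV: "w \<in> V" using edge_V[OF G w(1)] by simp
  have qw: "q \<noteq> w" using edge_irr[OF G w(1)] .
  have dqw: "gdist E q w = 1" by (rule gdist_edge[OF G w(1)])
  have "Ncomp V E q v \<subseteq> Ncomp V E q w"
  proof
    fix u assume "u \<in> Ncomp V E q v"
    then have uV: "u \<in> V" and c: "compatible E u q v" unfolding Ncomp_def by auto
    have u: "gdist E q v + gdist E v u = gdist E q u" using c qv unfolding compatible_def by simp
    have 1: "gdist E w u \<le> gdist E w v + gdist E v u" by (rule gdist_tri[OF G wV vV uV])
    have 2: "gdist E q u \<le> gdist E q w + gdist E w u" by (rule gdist_tri[OF G qV wV uV])
    have "gdist E q w + gdist E w u = gdist E q u" using 1 2 u w(2) dqw by linarith
    then have "compatible E u q w" using qw unfolding compatible_def by simp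
    then show "u \<in> Ncomp V E q w" using uV unfolding Ncomp_def by simp
  qed
  then show ?thesis using w(1) by blast
qed

lemma correct_in:
  assumes G: "connected_graph V E" and "t \<in> V" "q \<noteq> t" "correct_reply E t q v"
  shows "E q v" "t \<in> Ncomp V E q v"
proof -
  have cr: "E q v \<and> Suc (gdist E v t) = gdist E q t" using assms(3,4) unfolding correct_reply_def by simp
  show e: "E q v" using cr by simp
  have d: "Suc (gdist E v t) = gdist E q t" using cr by simp
  have "gdist E q v + gdist E v t = gdist E q t" using d gdist_edge[OF G e] by simp
  then have "compatible E t q v" using edge_irr[OF G e] unfolding compatible_def by simp
  then show "t \<in> Ncomp V E q v" using assms(2) unfolding Ncomp_def by simp
qed

lemma q_notin: "connected_graph V E \<Longrightarrow> E q v \<Longrightarrow> q \<notin> Ncomp V E q v"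
proof -
  assume G: "connected_graph V E" and e: "E q v"
  have "\<not> compatible E q q v" using gdist_edge[OF G e] gdist_self[of E q] edge_irr[OF G e]
    unfolding compatible_def by simp
  then show ?thesis unfolding Ncomp_def by simp
qed

lemma Ncomp_self: "q \<in> V \<Longrightarrow> Ncomp V E q q = {q}"
  unfolding Ncomp_def compatible_def by auto



lemma run_cong: "(\<And>i. i < t \<Longrightarrow> c i = c' i) \<Longrightarrow> run Q cor err c t = run Q cor err c' t"
proof (induction t)
  case 0 then show ?case by simp
next
  case (Suc t)
  have m: "map c [0..<t] = map c' [0..<t]" using Suc.prems by simp
  have r: "run Q cor err c t = run Q cor err c' t" using Suc by simp
  have ct: "c t = c' t" using Suc.prems by simp
  show ?case by (simp only: run.simps Let_def m r ct)
qed

lemma run_upd: "run Q cor err (c(t := y)) (Suc t) =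
   run Q cor err c t @ [(Q (run Q cor err c t),
      if y then err (map c [0..<t]) (Q (run Q cor err c t)) else cor (map c [0..<t]) (Q (run Q cor err c t)))]"
proof -
  have r: "run Q cor err (c(t := y)) t = run Q cor err c t" by (rule run_cong) simp
  have m: "map (c(t := y)) [0..<t] = map c [0..<t]" by simp
  show ?thesis by (simp add: Let_def r m)
qed

lemma expect_bound:
  fixes \<Phi> :: "('a \<times> 'a) list \<Rightarrow> real" and pr :: "nat \<Rightarrow> real"
  assumes nonneg: "\<And>h. \<Phi> h \<ge> 0" and pr: "\<And>i. 0 \<le> pr i \<and> pr i \<le> 1" and k: "\<kappa> \<ge> 0"
    and step: "\<And>i h bs. (1 - pr i) * \<Phi> (h @ [(Q h, cor bs (Q h))]) + pr i * \<Phi> (h @ [(Q h, err bs (Q h))])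
                  \<le> \<kappa> * \<Phi> h"
  shows "(\<integral>\<^sup>+c. ennreal (\<Phi> (run Q cor err c t)) \<partial>Pi_pmf {..<t} False (\<lambda>i. bernoulli_pmf (pr i)))
          \<le> ennreal (\<kappa>^t * \<Phi> [])"
proof (induction t)
  case 0
  then show ?case by (simp add: measure_pmf.emeasure_space_1)
next
  case (Suc t)
  let ?P = "\<lambda>i. bernoulli_pmf (pr i)"
  let ?R = "\<lambda>c. run Q cor err c t"
  have eqpmf: "Pi_pmf {..<Suc t} False ?P =
      bind_pmf (Pi_pmf {..<t} False ?P) (\<lambda>f. bind_pmf (?P t) (\<lambda>y. return_pmf (f(t := y))))"
  proof -
    have "Pi_pmf {..<Suc t} False ?P = Pi_pmf (insert t {..<t}) False ?P" by (simp add: lessThan_Suc)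
    also have "\<dots> = bind_pmf (?P t) (\<lambda>y. bind_pmf (Pi_pmf {..<t} False ?P) (\<lambda>f. return_pmf (f(t := y))))"
      by (rule Pi_pmf_insert') auto
    also have "\<dots> = bind_pmf (Pi_pmf {..<t} False ?P) (\<lambda>f. bind_pmf (?P t) (\<lambda>y. return_pmf (f(t := y))))"
      by (rule bind_commute_pmf)
    finally show ?thesis .
  qed
  have inner: "(\<integral>\<^sup>+y. ennreal (\<Phi> (run Q cor err (f(t := y)) (Suc t))) \<partial>?P t)
     = ennreal ((1 - pr t) * \<Phi> (?R f @ [(Q (?R f), cor (map f [0..<t]) (Q (?R f)))])
        + pr t * \<Phi> (?R f @ [(Q (?R f), err (map f [0..<t]) (Q (?R f)))]))" for f
    unfolding run_upd using pr[of t] nonneg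
    by (simp add: ennreal_mult'' add.commute mult.commute)
  have "(\<integral>\<^sup>+c. ennreal (\<Phi> (run Q cor err c (Suc t))) \<partial>Pi_pmf {..<Suc t} False ?P)
      = (\<integral>\<^sup>+f. (\<integral>\<^sup>+y. ennreal (\<Phi> (run Q cor err (f(t := y)) (Suc t))) \<partial>?P t) \<partial>Pi_pmf {..<t} False ?P)"
    unfolding eqpmf by simp
  also have "\<dots> \<le> (\<integral>\<^sup>+f. ennreal (\<kappa> * \<Phi> (?R f)) \<partial>Pi_pmf {..<t} False ?P)"
    unfolding inner by (intro nn_integral_mono ennreal_leI step)
  also have "\<dots> = ennreal \<kappa> * (\<integral>\<^sup>+f. ennreal (\<Phi> (?R f)) \<partial>Pi_pmf {..<t} False ?P)"
    using k by (simp add: ennreal_mult nonneg nn_integral_cmult)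
  also have "\<dots> \<le> ennreal \<kappa> * ennreal (\<kappa>^t * \<Phi> [])"
    by (intro mult_left_mono Suc.IH) auto
  also have "\<dots> = ennreal (\<kappa>^Suc t * \<Phi> [])"
    using k nonneg by (simp add: ennreal_mult[symmetric] mult.assoc)
  finally show ?case .
qed



lemma sum_if_split:
  fixes w :: "'a \<Rightarrow> real"
  assumes "finite A"
  shows "(\<Sum>u\<in>A. w u * (if u \<in> C then 1 else a)) = sum w A - (1 - a) * sum w (A - C)"
proof -
  have "(\<Sum>u\<in>A. w u * (if u \<in> C then 1 else a)) = sum w (A \<inter> C) + a * sum w (A - C)"
  proof -
    have "(\<Sum>u\<in>A. w u * (if u \<in> C then 1 else a)) = (\<Sum>u\<in>A. if u \<in> C then w u else a * w u)"
      by (rule sum.cong) auto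
    also have "\<dots> = sum w (A \<inter> C) + (\<Sum>u\<in>A - C. a * w u)"
      using assms by (simp add: sum.If_cases Diff_eq Int_def)
    finally show ?thesis by (simp add: sum_distrib_left)
  qed
  moreover have "sum w A = sum w (A \<inter> C) + sum w (A - C)"
    using assms by (metis sum.Int_Diff)
  ultimately show ?thesis by (simp add: algebra_simps)
qed

lemma step_ineq:
  fixes w :: "'a \<Rightarrow> real"
  assumes fin: "finite V" and tV: "t \<in> V" and pos: "\<And>u. u \<in> V \<Longrightarrow> w u > 0"
    and a: "1/2 < a" "a < 1"
    and CcV: "Cc \<subseteq> V" and CeV: "Ce \<subseteq> V" and tC: "t \<in> Cc"
    and cs: "Cc = {t} \<or> (sum w Cc \<le> (1/2 + (1-a)/16) * sum w V \<and>
               (sum w Ce \<le> (1/2 + (1-a)/16) * sum w V \<or> (\<exists>q. Ce = {q} \<and> q \<notin> Cc)))"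
  shows "(1 - a/2) * ((\<Sum>u\<in>V-{t}. w u * (if u \<in> Cc then 1 else a)) / (w t * (if t \<in> Cc then 1 else a)))
          + (a/2) * ((\<Sum>u\<in>V-{t}. w u * (if u \<in> Ce then 1 else a)) / (w t * (if t \<in> Ce then 1 else a)))
         \<le> (1 - 2*((1-a)/4)^2) * ((\<Sum>u\<in>V-{t}. w u) / w t)"
    and "(\<Sum>u\<in>V-{t}. w u * (if u \<in> Cc then 1 else a)) / (w t * (if t \<in> Cc then 1 else a))
         \<le> (1 - 2*((1-a)/4)^2) * ((\<Sum>u\<in>V-{t}. w u) / w t)"
proof -
  define Os where "Os = (\<Sum>u\<in>V-{t}. w u)"
  define X where "X = sum w (V - Cc)"
  define Y where "Y = sum w Ce"
  define W where "W = sum w V"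
  define \<kappa> where "\<kappa> = 1 - 2*((1-a)/4)^2"
  have wt: "w t > 0" using pos tV by auto
  have WO: "W = Os + w t" unfolding W_def Os_def using fin tV by (simp add: sum.remove)
  have O0: "Os \<ge> 0" unfolding Os_def using pos by (intro sum_nonneg) (auto intro: less_imp_le)
  have X0: "X \<ge> 0" unfolding X_def using pos by (intro sum_nonneg) (auto intro: less_imp_le)
  have Y0: "Y \<ge> 0" unfolding Y_def using pos CeV by (intro sum_nonneg) (auto intro: less_imp_le)
  have WX: "W = sum w Cc + X" unfolding W_def X_def using sum.subset_diff[OF CcV fin, of w] by simp
  have numc: "(\<Sum>u\<in>V-{t}. w u * (if u \<in> Cc then 1 else a)) = Os - (1-a) * X"
    using sum_if_split[of "V-{t}" w Cc a] fin tC unfolding Os_def X_def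
    by (simp add: Diff_insert2[symmetric] insert_absorb)
  have Fc: "(\<Sum>u\<in>V-{t}. w u * (if u \<in> Cc then 1 else a)) / (w t * (if t \<in> Cc then 1 else a))
       = (Os - (1-a) * X) / w t" using numc tC by simp
  define Fe where "Fe = (\<Sum>u\<in>V-{t}. w u * (if u \<in> Ce then 1 else a)) / (w t * (if t \<in> Ce then 1 else a))"
  have Fe1: "t \<in> Ce \<Longrightarrow> Fe \<le> Os / w t"
  proof -
    assume tCe: "t \<in> Ce"
    have "(\<Sum>u\<in>V-{t}. w u * (if u \<in> Ce then 1 else a)) \<le> Os"
      unfolding Os_def using pos a by (intro sum_mono) (auto intro: less_imp_le)
    then show ?thesis unfolding Fe_def using tCe wt by (simp add: divide_right_mono)
  qed
  have Fe2: "t \<notin> Ce \<Longrightarrow> Fe = (a * Os + (1-a) * Y) / (a * w t)"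
  proof -
    assume tCe: "t \<notin> Ce"
    have "(\<Sum>u\<in>V-{t}. w u * (if u \<in> Ce then 1 else a)) = Os - (1-a) * sum w (V - {t} - Ce)"
      using sum_if_split[of "V-{t}" w Ce a] fin unfolding Os_def by simp
    moreover have "Os = Y + sum w (V - {t} - Ce)"
    proof -
      have "Ce \<subseteq> V - {t}" using CeV tCe by auto
      then show ?thesis using sum.subset_diff[of Ce "V-{t}" w] fin unfolding Os_def Y_def by simp
    qed
    ultimately show ?thesis unfolding Fe_def using tCe by (simp add: algebra_simps)
  qed
  have Fe3: "t \<notin> Ce \<Longrightarrow> Fe = Os / w t + (1-a)/a * Y / w t"
    using Fe2 a wt by (simp add: field_simps)
  define e where "e = 1 - a"
  have e: "0 < e" "e < 1/2" using a unfolding e_def by auto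
  have ka: "1 - \<kappa> = e^2/8" unfolding \<kappa>_def e_def by (simp add: power2_eq_square field_simps)
  have XWg: "X \<ge> (1/2 - e/16) * W" if "sum w Cc \<le> (1/2 + e/16) * W"
  proof -
    have "(1/2 - e/16) * W = W - (1/2 + e/16) * W" by (simp add: algebra_simps)
    then show ?thesis using WX that by linarith
  qed
  have XleO: "X \<le> Os" unfolding X_def Os_def using tC pos fin
    by (intro sum_mono2) (auto intro: less_imp_le)
  have XO: "X \<ge> Os/4"
  proof (cases "Cc = {t}")
    case True
    then have "X = Os" unfolding X_def Os_def by simp
    then show ?thesis using O0 by simp
  next
    case False
    then have "sum w Cc \<le> (1/2 + e/16) * W" using cs W_def e_def by auto
    then have XW: "X \<ge> (1/2 - e/16) * W" using XWg by blast
    have "(1/2 - e/16) * W \<ge> (1/4) * W" using e WO O0 wt by (intro mult_right_mono) auto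
    then show ?thesis using XW WO wt by simp
  qed
  have ae: "1 - a/2 = 1/2 + e/2" by (simp add: e_def field_simps)
  have sq: "e^2 \<le> e" using e by (simp add: power2_eq_square mult_le_cancel_left1)
  have key1: "e * ((1 - a/2) * X) \<ge> e^2/8 * Os"
  proof -
    have "(1 - a/2) * X \<ge> (1/2) * X" using X0 a by (intro mult_right_mono) auto
    then have "(1 - a/2) * X \<ge> Os/8" using XO by linarith
    then have "e * ((1 - a/2) * X) \<ge> e * (Os/8)" using e by (intro mult_left_mono) auto
    moreover have "e * (Os/8) \<ge> e^2/8 * Os" using sq O0 by (simp add: mult_right_mono)
    ultimately show ?thesis by linarith
  qed
  have key1': "(1-\<kappa>) * Os \<le> e * ((1 - a/2) * X)" using key1 unfolding ka .
  have Fcv: "(\<Sum>u\<in>V-{t}. w u * (if u \<in> Cc then 1 else a)) / (w t * (if t \<in> Cc then 1 else a))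
       = Os / w t - e * X / w t" using Fc by (simp add: e_def diff_divide_distrib)
  show goal2: "(\<Sum>u\<in>V-{t}. w u * (if u \<in> Cc then 1 else a)) / (w t * (if t \<in> Cc then 1 else a))
         \<le> \<kappa> * (Os / w t)"
  proof -
    have "e * X \<ge> e * (Os/4)" using XO e by (intro mult_left_mono) auto
    moreover have "e * (Os/4) \<ge> e^2/8 * Os"
    proof -
      have "e^2/8 * Os \<le> e/8 * Os" using sq O0 by (intro mult_right_mono) auto
      moreover have "e * Os \<ge> 0" using e O0 by simp
      ultimately show ?thesis by (simp add: mult.commute)
    qed
    ultimately have "e * X \<ge> e^2/8 * Os" by linarith
    then have "e * X \<ge> (1-\<kappa>) * Os" unfolding ka .
    then have h: "e * X / w t \<ge> (1-\<kappa>) * Os / w t" using wt by (simp add: divide_right_mono)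
    have eq: "\<kappa> * (Os / w t) = Os / w t - (1-\<kappa>) * Os / w t" using wt by (simp add: field_simps)
    have gen: "\<And>A B C K::real. K = A - C \<Longrightarrow> C \<le> B \<Longrightarrow> A - B \<le> K" by linarith
    show ?thesis unfolding Fcv by (rule gen[OF eq h])
  qed
  show "(1 - a/2) * ((\<Sum>u\<in>V-{t}. w u * (if u \<in> Cc then 1 else a)) / (w t * (if t \<in> Cc then 1 else a)))
          + (a/2) * Fe \<le> \<kappa> * (Os / w t)"
  proof (cases "t \<in> Ce")
    case True
    have "(1 - a/2) * ((\<Sum>u\<in>V-{t}. w u * (if u \<in> Cc then 1 else a)) / (w t * (if t \<in> Cc then 1 else a)))
          + (a/2) * Fe \<le> (1 - a/2) * (Os / w t - e * X / w t) + (a/2) * (Os / w t)"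
      using Fcv Fe1[OF True] a by (intro add_mono mult_left_mono) auto
    also have "\<dots> = (Os - e * ((1 - a/2) * X)) / w t" using wt by (simp add: field_simps)
    also have "\<dots> \<le> (Os - (1-\<kappa>) * Os) / w t" using key1' wt by (intro divide_right_mono) auto
    also have "\<dots> = \<kappa> * (Os / w t)" by (simp add: algebra_simps)
    finally show ?thesis .
  next
    case False
    have YO: "Y \<le> Os" unfolding Y_def Os_def using CeV False pos fin
      by (intro sum_mono2) (auto intro: less_imp_le)
    have key2: "(1 - a/2) * X - Y/2 \<ge> e * Os / 8"
    proof (cases "Cc = {t}")
      case True
      then have "X = Os" unfolding X_def Os_def by simp
      moreover have "e * Os \<ge> 0" using e O0 by simp
      moreover have "(1 - a/2) * X = Os/2 + e * Os / 2" using \<open>X = Os\<close> by (simp add: e_def field_simps)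
      ultimately show ?thesis using YO by linarith
    next
      case cF: False
      show ?thesis
      proof (cases "\<exists>q. Ce = {q} \<and> q \<notin> Cc")
        case True
        then obtain q where q: "Ce = {q}" "q \<notin> Cc" by blast
        have "Y = w q" unfolding Y_def q by simp
        also have "\<dots> \<le> X" unfolding X_def using q CeV pos fin
          by (intro member_le_sum) (auto intro: less_imp_le)
        finally have "Y \<le> X" .
        moreover have "e * X \<ge> e * (Os/4)" using XO e by (intro mult_left_mono) auto
        moreover have "(1 - a/2) * X = X/2 + e * X / 2" by (simp add: e_def field_simps)
        ultimately show ?thesis by linarith
      next
        case False
        then have h: "sum w Cc \<le> (1/2 + e/16) * W" "Y \<le> (1/2 + e/16) * W"
          using cs cF W_def e_def Y_def by auto
        then have XW: "X \<ge> (1/2 - e/16) * W" using XWg by blast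
        have W0: "W \<ge> Os" using WO wt by simp
        have f1: "(1/2 + e/2) * ((1/2 - e/16) * W) \<le> (1 - a/2) * X"
          using XW e unfolding ae by (intro mult_left_mono) auto
        have f2: "(1/2 + e/2) * ((1/2 - e/16) * W) - ((1/2 + e/16) * W) / 2 = e * (3/16 - e/32) * W"
          by (simp add: field_simps)
        have f3: "e * Os / 8 \<le> e * (3/16 - e/32) * W"
        proof -
          have "(3/16 - e/32) * W \<ge> (1/8) * W" using e W0 O0 by (intro mult_right_mono) auto
          then have "(3/16 - e/32) * W \<ge> (1/8) * Os" using W0 by linarith
          then have "e * ((1/8) * Os) \<le> e * ((3/16 - e/32) * W)" using e by (intro mult_left_mono) auto
          then show ?thesis by (simp add: mult.assoc)
        qed
        have gen: "\<And>P Q R Z Y S::real. P \<le> Q \<Longrightarrow> P - Z/2 = R \<Longrightarrow> S \<le> R \<Longrightarrow> Y \<le> Z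
            \<Longrightarrow> S \<le> Q - Y/2" by linarith
        show ?thesis by (rule gen[OF f1 f2 f3 h(2)])
      qed
    qed
    have "(1 - a/2) * ((\<Sum>u\<in>V-{t}. w u * (if u \<in> Cc then 1 else a)) / (w t * (if t \<in> Cc then 1 else a)))
          + (a/2) * Fe = (Os - e * ((1 - a/2) * X - Y/2)) / w t"
      unfolding Fcv Fe3[OF False] using wt a by (simp add: e_def field_simps)
    also have "\<dots> \<le> (Os - (1-\<kappa>) * Os) / w t"
    proof -
      have A: "e * ((1 - a/2) * X - Y/2) \<ge> e * (e * Os / 8)" using key2 e by (intro mult_left_mono) auto
      have eq: "e * (e * Os / 8) = (1-\<kappa>) * Os" unfolding ka by (simp add: power2_eq_square)
      have "(1-\<kappa>) * Os \<le> e * ((1 - a/2) * X - Y/2)" using A unfolding eq .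
      then show ?thesis using wt by (intro divide_right_mono) auto
    qed
    also have "\<dots> = \<kappa> * (Os / w t)" by (simp add: algebra_simps)
    finally show ?thesis .
  qed
qed


definition Fpot :: "'a set \<Rightarrow> ('a \<Rightarrow> 'a \<Rightarrow> bool) \<Rightarrow> real \<Rightarrow> 'a \<Rightarrow> ('a \<times> 'a) list \<Rightarrow> real" where
  "Fpot V E \<Gamma> t h = (\<Sum>u\<in>V-{t}. weight V E \<Gamma> h u) / weight V E \<Gamma> h t"

lemma cnt_snoc: "cnt E (h @ [(q, v)]) u = cnt E h u + (if compatible E u q v then 0 else 1)"
  unfolding cnt_def by simp

lemma weight_snoc:
  assumes "a \<noteq> 0"
  shows "weight V E (1/a) (h @ [(q, v)]) u = weight V E (1/a) h u * (if compatible E u q v then 1 else a)"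
  using assms unfolding weight_def cnt_snoc by (simp add: power_add field_simps)

lemma weight_pos: "finite V \<Longrightarrow> V \<noteq> {} \<Longrightarrow> a > 0 \<Longrightarrow> weight V E (1/a) h u > 0"
  unfolding weight_def by (simp add: card_gt_0_iff)

lemma conv_comb:
  fixes Fc Fe K p r :: real
  assumes "0 \<le> r" "r \<le> p" "0 < p" "Fc \<le> K" "(1-p) * Fc + p * Fe \<le> K"
  shows "(1-r) * Fc + r * Fe \<le> K"
proof -
  define s where "s = r / p"
  have s: "0 \<le> s" "s \<le> 1" using assms unfolding s_def by (auto simp: field_simps)
  have "(1-r) * Fc + r * Fe = (1-s) * Fc + s * ((1-p) * Fc + p * Fe)"
    unfolding s_def using assms by (simp add: field_simps)
  also have "\<dots> \<le> (1-s) * K + s * K"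
    using s assms by (intro add_mono mult_left_mono) auto
  finally show ?thesis by (simp add: algebra_simps)
qed

lemma step_main:
  assumes G: "connected_graph V E" and tV: "t \<in> V" and a: "1/2 < a" "a < 1"
    and qc: "delta_close V E (weight V E (1/a) h) ((1-a)/16) q"
    and cr: "correct_reply E t q vc" and ve: "ve \<in> V" and pr: "0 \<le> r" "r \<le> a/2"
  shows "(1-r) * Fpot V E (1/a) t (h @ [(q, vc)]) + r * Fpot V E (1/a) t (h @ [(q, ve)])
         \<le> (1 - 2*((1-a)/4)^2) * Fpot V E (1/a) t h"
proof -
  have fin: "finite V" and ne: "V \<noteq> {}" using cg_parts[OF G] by auto
  define w where "w = weight V E (1/a) h"
  have pos: "\<And>u. u \<in> V \<Longrightarrow> w u > 0" unfolding w_def using weight_pos[OF fin ne, of a] a by simp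
  have qV: "q \<in> V" using qc unfolding delta_close_def by auto
  have dc: "\<And>u. E q u \<Longrightarrow> sum w (Ncomp V E q u) \<le> (1/2 + (1-a)/16) * sum w V"
    using qc unfolding delta_close_def wsum_def w_def by simp
  define Cc where "Cc = Ncomp V E q vc"
  define Ce where "Ce = Ncomp V E q ve"
  have CcV: "Cc \<subseteq> V" and CeV: "Ce \<subseteq> V" unfolding Cc_def Ce_def Ncomp_def by auto
  have Fsnoc: "Fpot V E (1/a) t (h @ [(q, v)]) =
      (\<Sum>u\<in>V-{t}. w u * (if u \<in> Ncomp V E q v then 1 else a)) / (w t * (if t \<in> Ncomp V E q v then 1 else a))" for v
  proof -
    have "(\<Sum>u\<in>V-{t}. weight V E (1/a) (h @ [(q, v)]) u) = (\<Sum>u\<in>V-{t}. w u * (if u \<in> Ncomp V E q v then 1 else a))"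
      using a unfolding w_def by (intro sum.cong) (auto simp: weight_snoc Ncomp_def)
    then show ?thesis unfolding Fpot_def using a tV by (simp add: weight_snoc Ncomp_def w_def)
  qed
  have F0: "Fpot V E (1/a) t h = (\<Sum>u\<in>V-{t}. w u) / w t" unfolding Fpot_def w_def ..
  have tC: "t \<in> Cc"
  proof (cases "q = t")
    case True
    then have "vc = t" using cr unfolding correct_reply_def by auto
    then show ?thesis using True Ncomp_self[OF tV, of E] unfolding Cc_def by simp
  next
    case False
    then show ?thesis using correct_in[OF G tV False cr] unfolding Cc_def by simp
  qed
  have cs: "Cc = {t} \<or> (sum w Cc \<le> (1/2 + (1-a)/16) * sum w V \<and>
               (sum w Ce \<le> (1/2 + (1-a)/16) * sum w V \<or> (\<exists>q. Ce = {q} \<and> q \<notin> Cc)))"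
  proof (cases "q = t")
    case True
    then have "vc = t" using cr unfolding correct_reply_def by auto
    then show ?thesis using True Ncomp_self[OF tV, of E] unfolding Cc_def by simp
  next
    case False
    have e: "E q vc" using correct_in[OF G tV False cr] by simp
    have c1: "sum w Cc \<le> (1/2 + (1-a)/16) * sum w V"
      unfolding Cc_def by (rule dc[OF e])
    have c2: "sum w Ce \<le> (1/2 + (1-a)/16) * sum w V \<or> (\<exists>q. Ce = {q} \<and> q \<notin> Cc)"
    proof (cases "ve = q")
      case True
      then have "Ce = {q}" unfolding Ce_def using Ncomp_self[OF qV] by simp
      moreover have "q \<notin> Cc" unfolding Cc_def using q_notin[OF G e] .
      ultimately show ?thesis by blast
    next
      case False
      have qve: "q \<noteq> ve" using False by simp
      obtain w' where w': "E q w'" "Ncomp V E q ve \<subseteq> Ncomp V E q w'"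
        using Ncomp_sub[OF G qV ve qve] by blast
      have "sum w Ce \<le> sum w (Ncomp V E q w')"
        using w'(2) fin pos unfolding Ce_def by (intro sum_mono2) (auto simp: Ncomp_def intro: less_imp_le)
      also have "\<dots> \<le> (1/2 + (1-a)/16) * sum w V"
        by (rule dc[OF w'(1)])
      finally show ?thesis by blast
    qed
    show ?thesis using c1 c2 by blast
  qed
  note S = step_ineq[OF fin tV pos a CcV CeV tC cs]
  have p0: "0 < a/2" using a by simp
  show ?thesis unfolding Fsnoc F0 Cc_def[symmetric] Ce_def[symmetric]
    by (rule conv_comb[OF pr(1) pr(2) p0 S(2) S(1)])
qed



lemma numeric:
  fixes \<eta> :: real and n \<tau> :: nat
  assumes e: "0 < \<eta>" "\<eta> < 1/8" and n: "n \<ge> 1"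
    and tau: "\<tau> = nat \<lceil>10 * log 2 (real n) / \<eta>^2\<rceil>"
  shows "(1 - 2*\<eta>^2)^\<tau> * (real n - 1) \<le> 1 / real n ^ 3"
proof (cases "n = 1")
  case True then show ?thesis by simp
next
  case False
  then have n2: "real n \<ge> 2" using n by simp
  have "\<eta>*\<eta> \<le> (1/8)*(1/8)" using e by (intro mult_mono) auto
  then have k0: "0 \<le> 1 - 2*\<eta>^2" by (simp add: power2_eq_square)
  have k1: "1 - 2*\<eta>^2 \<le> exp (-(2*\<eta>^2))" using exp_ge_add_one_self[of "-(2*\<eta>^2)"] by simp
  have "(1 - 2*\<eta>^2)^\<tau> \<le> exp (-(2*\<eta>^2))^\<tau>" by (rule power_mono[OF k1 k0])
  also have "\<dots> = exp (-(2*\<eta>^2) * real \<tau>)" by (simp add: exp_of_nat_mult[symmetric] mult.commute)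
  also have "\<dots> \<le> exp (-(4 * ln (real n)))"
  proof -
    have t: "real \<tau> \<ge> 10 * log 2 (real n) / \<eta>^2" unfolding tau by linarith
    have "2*\<eta>^2 * real \<tau> \<ge> 2*\<eta>^2 * (10 * log 2 (real n) / \<eta>^2)"
      using t e by (intro mult_left_mono) auto
    also have "2*\<eta>^2 * (10 * log 2 (real n) / \<eta>^2) = 20 * log 2 (real n)" using e by simp
    finally have A: "2*\<eta>^2 * real \<tau> \<ge> 20 * log 2 (real n)" .
    have lnn: "ln (real n) \<ge> 0" using n2 by simp
    have "log 2 (real n) = ln (real n) / ln 2" by (simp add: log_def)
    moreover have "ln (real n) / ln 2 \<ge> ln (real n)" using lnn ln_2_less_1
      by (simp add: le_divide_eq mult_left_le)
    ultimately have "log 2 (real n) \<ge> ln (real n)" by simp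
    then have "2*\<eta>^2 * real \<tau> \<ge> 4 * ln (real n)" using A lnn by linarith
    then show ?thesis by simp
  qed
  also have "\<dots> = 1 / real n ^ 4"
  proof -
    have "exp (4 * ln (real n)) = real n ^ 4" using n2 by (simp add: exp_of_nat_mult[of 4, simplified] exp_ln)
    then show ?thesis by (simp add: exp_minus field_simps)
  qed
  finally have B: "(1 - 2*\<eta>^2)^\<tau> \<le> 1 / real n ^ 4" .
  have "(1 - 2*\<eta>^2)^\<tau> * (real n - 1) \<le> 1 / real n ^ 4 * real n"
    using B n2 k0 by (intro mult_mono) auto
  also have "\<dots> = 1 / real n ^ 3"
  proof -
    have "real n ^ 4 = real n * real n ^ 3" by (simp add: numeral_eq_Suc)
    then show ?thesis using n2 by simp
  qed
  finally show ?thesis .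
qed

theorem lemma11:
  fixes V :: "'a set" and E :: "'a \<Rightarrow> 'a \<Rightarrow> bool"
    and \<epsilon> :: real and vstar :: 'a
    and Q :: "('a \<times> 'a) list \<Rightarrow> 'a"
    and cor err :: "bool list \<Rightarrow> 'a \<Rightarrow> 'a"
    and out :: "('a \<times> 'a) list \<Rightarrow> 'a"
    and pr :: "nat \<Rightarrow> real"
  defines "n \<equiv> card V"
    and "p \<equiv> 1/2 - \<epsilon>"
    and "\<eta> \<equiv> \<epsilon> / 2"
  defines "\<delta> \<equiv> \<eta> / 4"
    and "\<Gamma> \<equiv> 1 / (1 - 4 * \<eta>)"
    and "\<tau> \<equiv> nat \<lceil>10 * log 2 (real n) / \<eta>^2\<rceil>"
  assumes graph: "connected_graph V E"
    and eps: "0 < \<epsilon>" "\<epsilon> \<le> 1/2"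
    and eta_small: "\<eta> < 1/8"
    and target: "vstar \<in> V"
    and query: "\<And>h. delta_close V E (weight V E \<Gamma> h) \<delta> (Q h)"
    and cor: "\<And>bs q. q \<in> V \<Longrightarrow> correct_reply E vstar q (cor bs q)"
    and err: "\<And>bs q. q \<in> V \<Longrightarrow> err bs q \<in> V"
    and outsel: "\<And>h. out h \<in> V \<and> (\<forall>u\<in>V. cnt E h (out h) \<le> cnt E h u)"
    and noise: "\<And>t. 0 \<le> pr t \<and> pr t \<le> p"
  shows "measure_pmf.prob (Pi_pmf {..<\<tau>} False (\<lambda>t. bernoulli_pmf (pr t)))
           {c. out (run Q cor err c \<tau>) = vstar} \<ge> 1 - 1 / real n ^ 3"
proof -
  have fin: "finite V" and ne: "V \<noteq> {}" using cg_parts[OF graph] by auto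
  have n1: "n \<ge> 1" unfolding n_def using fin ne by (simp add: Suc_leI card_gt_0_iff)
  define a where "a = 1 - 2*\<epsilon>"
  have e4: "\<epsilon> < 1/4" using eta_small unfolding \<eta>_def by simp
  have a: "1/2 < a" "a < 1" unfolding a_def using eps e4 by auto
  have \<Gamma>a: "\<Gamma> = 1/a" unfolding \<Gamma>_def \<eta>_def a_def by simp
  have \<delta>a: "\<delta> = (1-a)/16" unfolding \<delta>_def \<eta>_def a_def by simp
  have pa: "p = a/2" unfolding p_def a_def by simp
  have \<eta>a: "(1-a)/4 = \<eta>" unfolding \<eta>_def a_def by simp
  define \<kappa> where "\<kappa> = 1 - 2*((1-a)/4)^2"
  have \<kappa>\<eta>: "\<kappa> = 1 - 2*\<eta>^2" unfolding \<kappa>_def \<eta>a ..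
  have \<eta>0: "0 < \<eta>" unfolding \<eta>_def using eps by simp
  have "\<eta>*\<eta> \<le> (1/8)*(1/8)" using \<eta>0 eta_small by (intro mult_mono) auto
  then have \<kappa>0: "\<kappa> \<ge> 0" unfolding \<kappa>\<eta> by (simp add: power2_eq_square)
  define \<Phi> where "\<Phi> = Fpot V E \<Gamma> vstar"
  have wpos: "\<And>h u. weight V E \<Gamma> h u > 0" unfolding \<Gamma>a using weight_pos[OF fin ne, of a] a by simp
  have nonneg: "\<And>h. \<Phi> h \<ge> 0" unfolding \<Phi>_def Fpot_def using wpos
    by (intro divide_nonneg_pos sum_nonneg) (auto intro: less_imp_le)
  have prb: "\<And>i. 0 \<le> pr i \<and> pr i \<le> 1"
  proof -
    fix i
    have "0 \<le> pr i" "pr i \<le> 1/2 - \<epsilon>" using noise[of i] unfolding p_def by auto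
    then show "0 \<le> pr i \<and> pr i \<le> 1" using eps by linarith
  qed
  have step: "\<And>i h bs. (1 - pr i) * \<Phi> (h @ [(Q h, cor bs (Q h))]) + pr i * \<Phi> (h @ [(Q h, err bs (Q h))])
                  \<le> \<kappa> * \<Phi> h"
  proof -
    fix i h bs
    have qc: "delta_close V E (weight V E (1/a) h) ((1-a)/16) (Q h)" using query[of h] unfolding \<Gamma>a \<delta>a .
    have qV: "Q h \<in> V" using qc unfolding delta_close_def by simp
    have r: "0 \<le> pr i" "pr i \<le> a/2" using noise[of i] unfolding pa by auto
    show "(1 - pr i) * \<Phi> (h @ [(Q h, cor bs (Q h))]) + pr i * \<Phi> (h @ [(Q h, err bs (Q h))]) \<le> \<kappa> * \<Phi> h"
      unfolding \<Phi>_def \<kappa>_def \<Gamma>a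
      by (rule step_main[OF graph target a qc cor[OF qV] err[OF qV] r])
  qed
  let ?M = "Pi_pmf {..<\<tau>} False (\<lambda>t. bernoulli_pmf (pr t))"
  have EB: "(\<integral>\<^sup>+c. ennreal (\<Phi> (run Q cor err c \<tau>)) \<partial>?M) \<le> ennreal (\<kappa>^\<tau> * \<Phi> [])"
    by (rule expect_bound[OF nonneg prb \<kappa>0 step])
  have \<Phi>0: "\<Phi> [] = real n - 1"
  proof -
    have "\<Phi> [] = (\<Sum>u\<in>V-{vstar}. 1)" unfolding \<Phi>_def Fpot_def weight_def cnt_def
      using n1 unfolding n_def by simp
    also have "\<dots> = real n - 1"
    proof -
      have cV: "card V \<ge> 1" using n1 unfolding n_def .
      then show ?thesis unfolding n_def using fin target by (simp add: of_nat_diff)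
    qed
    finally show ?thesis .
  qed
  have succ: "out h = vstar" if "\<Phi> h < 1" for h
  proof (rule ccontr)
    assume ne: "out h \<noteq> vstar"
    define u where "u = out h"
    have uV: "u \<in> V" and cu: "cnt E h u \<le> cnt E h vstar" using outsel[of h] target unfolding u_def by auto
    have G1: "\<Gamma> \<ge> 1" unfolding \<Gamma>a using a by simp
    have "\<Gamma> ^ cnt E h u \<le> \<Gamma> ^ cnt E h vstar" by (rule power_increasing[OF cu G1])
    then have wle: "weight V E \<Gamma> h vstar \<le> weight V E \<Gamma> h u" unfolding weight_def using G1 n1 unfolding n_def
      by (simp add: divide_simps)
    have "weight V E \<Gamma> h u \<le> (\<Sum>u\<in>V-{vstar}. weight V E \<Gamma> h u)"
      using uV ne fin wpos unfolding u_def by (intro member_le_sum) (auto intro: less_imp_le)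
    then have "weight V E \<Gamma> h vstar \<le> (\<Sum>u\<in>V-{vstar}. weight V E \<Gamma> h u)" using wle by linarith
    then have "\<Phi> h \<ge> 1" unfolding \<Phi>_def Fpot_def using wpos[of h vstar] by simp
    then show False using that by simp
  qed
  have "emeasure ?M {c. \<Phi> (run Q cor err c \<tau>) \<ge> 1} = (\<integral>\<^sup>+c. indicator {c. \<Phi> (run Q cor err c \<tau>) \<ge> 1} c \<partial>?M)"
    by simp
  also have "\<dots> \<le> (\<integral>\<^sup>+c. ennreal (\<Phi> (run Q cor err c \<tau>)) \<partial>?M)"
    by (intro nn_integral_mono) (auto split: split_indicator)
  also have "\<dots> \<le> ennreal (\<kappa>^\<tau> * (real n - 1))" using EB \<Phi>0 by simp
  finally have "ennreal (measure_pmf.prob ?M {c. \<Phi> (run Q cor err c \<tau>) \<ge> 1}) \<le> ennreal (\<kappa>^\<tau> * (real n - 1))"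
    by (simp add: measure_pmf.emeasure_eq_measure)
  then have B1: "measure_pmf.prob ?M {c. \<Phi> (run Q cor err c \<tau>) \<ge> 1} \<le> \<kappa>^\<tau> * (real n - 1)"
    using \<kappa>0 n1 by (simp add: ennreal_le_iff)
  have B2: "\<kappa>^\<tau> * (real n - 1) \<le> 1 / real n ^ 3"
    unfolding \<kappa>\<eta> by (rule numeric[OF \<eta>0 eta_small n1 meta_eq_to_obj_eq[OF \<tau>_def]])
  have sub: "{c. out (run Q cor err c \<tau>) \<noteq> vstar} \<subseteq> {c. \<Phi> (run Q cor err c \<tau>) \<ge> 1}"
    using succ by force
  have "measure_pmf.prob ?M {c. out (run Q cor err c \<tau>) \<noteq> vstar} \<le> measure_pmf.prob ?M {c. \<Phi> (run Q cor err c \<tau>) \<ge> 1}"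
    using sub by (rule measure_pmf.finite_measure_mono) simp
  moreover have "measure_pmf.prob ?M {c. out (run Q cor err c \<tau>) = vstar}
      = 1 - measure_pmf.prob ?M {c. out (run Q cor err c \<tau>) \<noteq> vstar}"
  proof -
    have "{c. out (run Q cor err c \<tau>) = vstar} = space ?M - {c. out (run Q cor err c \<tau>) \<noteq> vstar}" (is "_ = ?S") by auto
    then show ?thesis by (simp only:) (rule measure_pmf.prob_compl, simp)
  qed
  ultimately show ?thesis using B1 B2 by linarith
qed

end
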